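(* Let $\phi:\mathbb{R}_+\to\mathbb{R}_+$ be a non-negative continuous function and $d\nu(r)=\phi(r)\,dr$ the corresponding Borel measure on $\mathbb{R}_+$. Let $I$ be a non-negative function on $\mathbb{R}_+$ such that: (i) for some constant $C>0$ and all $a,b\ge0$, $C\,I(ab)\le bI(a)+aI(b)$; (ii) $I$ is a concave lower isoperimetric function for $\nu$. Then for every non-negative continuously differentiable function $f$ on $\mathbb{R}_+$ with bounded support, $$C\,I\Big(\int_{\mathbb{R}_+}f\,d\nu\Big)\le\int_{\mathbb{R}_+}I(f)\,d\nu+\int_{\mathbb{R}_+}|f'|\,d\nu.$$
   Context: $\mathbb{R}_+=[0,\infty)$ with the metric $|x-y|$. For a Borel set $A\subset\mathbb{R}_+$, $\nu^+(A)=\liminf_{r\to0^+}\frac{\nu(A^r)-\nu(A)}{r}$, where $A^r=\{x\in\mathbb{R}_+:\operatorname{dist}(x,A)<r\}$. A function $J$ is a lower isoperimetric function for $\nu$ if $\nu^+(A)\ge J(\nu(A))$ for every Borel set $A\subset\mathbb{R}_+$. *)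

theory Defs
  imports "HOL-Analysis.Analysis" "HOL-Probability.Probability"
begin

definition nu_measure :: "(real \<Rightarrow> real) \<Rightarrow> real measure" where
  "nu_measure \<phi> = density (restrict_space lborel {0..}) (\<lambda>x. ennreal (\<phi> x))"

definition r_nbhd :: "real set \<Rightarrow> real \<Rightarrow> real set" where
  "r_nbhd A r = {x. 0 \<le> x \<and> (\<exists>a\<in>A. \<bar>x - a\<bar> < r)}"

definition boundary_measure :: "real measure \<Rightarrow> real set \<Rightarrow> ereal" where
  "boundary_measure M A =
     Liminf (at_right (0::real))
       (\<lambda>r. (enn2ereal (emeasure M (r_nbhd A r)) - enn2ereal (emeasure M A)) / ereal r)"

text \<open>J is a lower isoperimetric function for M: nu^+(A) \<ge> J(nu(A)) for every Borel A \<subseteq> R_+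
  (of finite measure, so that J(nu(A)) is defined).\<close>
definition lower_isoperimetric :: "real measure \<Rightarrow> (real \<Rightarrow> real) \<Rightarrow> bool" where
  "lower_isoperimetric M J \<longleftrightarrow>
     (\<forall>A\<in>sets M. emeasure M A < \<infinity> \<longrightarrow>
        boundary_measure M A \<ge> ereal (J (enn2real (emeasure M A))))"

end

theory Submission
  imports Defs
begin

lemma concave_three_chord:
  fixes I :: "real \<Rightarrow> real"
  assumes "concave_on {0..} I" "0 \<le> w" "w < y" "y < v"
  shows "(I v - I y) / (v - y) \<le> (I y - I w) / (y - w)"
proof -
  have cv: "convex_on {0..} (\<lambda>x. - I x)" using assms(1) by (simp add: concave_on_def)
  have "((- I w) - (- I y)) / (w - y) \<le> ((- I y) - (- I v)) / (y - v)"
    using convex_on_slope_le[OF cv, of w v y] assms by auto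
  moreover have "((- I w) - (- I y)) / (w - y) = - ((I y - I w) / (y - w))"
    by (metis minus_diff_eq divide_minus_right minus_diff_minus)
  moreover have "((- I y) - (- I v)) / (y - v) = - ((I v - I y) / (v - y))"
    by (metis minus_diff_eq divide_minus_right minus_diff_minus)
  ultimately show ?thesis by linarith
qed

lemma concave_support:
  fixes I :: "real \<Rightarrow> real"
  assumes conc: "concave_on {0..} I" and nn: "\<And>x. 0 \<le> x \<Longrightarrow> 0 \<le> I x" and y: "0 < y"
  shows "\<exists>k\<ge>0. \<forall>w\<ge>0. I w \<le> I y + k * (w - y)"
proof -
  define S where "S = (\<lambda>w. (I y - I w) / (y - w)) ` {0..<y}"
  define k where "k = Inf S"
  have Sne: "S \<noteq> {}" using y unfolding S_def by auto
  have lb: "(I v - I y) / (v - y) \<le> s" if "v > y" "s \<in> S" for v s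
    using that concave_three_chord[OF conc] unfolding S_def by auto
  have bdd: "bdd_below S"
    by (rule bdd_belowI[of _ "(I (y+1) - I y) / ((y+1) - y)"]) (use lb[of "y+1"] in auto)
  have left: "I w \<le> I y + k * (w - y)" if "0 \<le> w" "w < y" for w
  proof -
    have "k \<le> (I y - I w) / (y - w)" unfolding k_def
      by (rule cInf_lower[OF _ bdd]) (use that in \<open>auto simp: S_def\<close>)
    hence "k * (y - w) \<le> I y - I w" using that by (simp add: le_divide_eq)
    thus ?thesis by (simp add: algebra_simps)
  qed
  have right: "I v \<le> I y + k * (v - y)" if "v > y" for v
  proof -
    have "(I v - I y) / (v - y) \<le> k" unfolding k_def
      by (rule cInf_greatest[OF Sne]) (use lb that in auto)
    hence "I v - I y \<le> k * (v - y)" using that by (simp add: divide_le_eq)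
    thus ?thesis by simp
  qed
  have all: "I w \<le> I y + k * (w - y)" if "0 \<le> w" for w
    using left right that by (cases "w < y"; cases "w = y") auto
  have "k \<ge> 0"
  proof (rule ccontr)
    assume "\<not> k \<ge> 0"
    hence k: "k < 0" by simp
    define v where "v = y + I y / (- k) + 1"
    have "I y / (- k) \<ge> 0" using nn[of y] y k by (simp add: divide_nonneg_neg)
    hence v: "v \<ge> 0" "v - y = I y / (- k) + 1" using y unfolding v_def by auto
    have "k * (v - y) = - I y + k" using k by (simp add: v algebra_simps)
    hence "I v < 0" using all[OF v(1)] k by linarith
    thus False using nn[OF v(1)] by simp
  qed
  thus ?thesis using all by blast
qed

lemma concave_mono:
  fixes I :: "real \<Rightarrow> real"
  assumes conc: "concave_on {0..} I" and nn: "\<And>x. 0 \<le> x \<Longrightarrow> 0 \<le> I x"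
    and "0 \<le> w" "w \<le> y"
  shows "I w \<le> I y"
proof (cases "w = y")
  case False
  hence "0 < y" using assms by auto
  then obtain k where "k \<ge> 0" "\<forall>w\<ge>0. I w \<le> I y + k * (w - y)"
    using concave_support[OF conc nn] by blast
  hence "I w \<le> I y + k * (w - y)" using assms by auto
  moreover have "k * (w - y) \<le> 0" using \<open>k \<ge> 0\<close> assms by (simp add: mult_nonneg_nonpos)
  ultimately show ?thesis by linarith
qed simp


locale thm_setup =
  fixes \<phi> I f f' :: "real \<Rightarrow> real" and C R :: real
  assumes phi_nonneg: "\<And>x. 0 \<le> x \<Longrightarrow> 0 \<le> \<phi> x"
    and phi_cont: "continuous_on {0..} \<phi>"
    and I_nonneg: "\<And>x. 0 \<le> x \<Longrightarrow> 0 \<le> I x"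
    and C_pos: "C > 0"
    and I_mult: "\<And>a b. 0 \<le> a \<Longrightarrow> 0 \<le> b \<Longrightarrow> C * I (a * b) \<le> b * I a + a * I b"
    and I_concave: "concave_on {0..} I"
    and I_iso: "lower_isoperimetric (nu_measure \<phi>) I"
    and f_nonneg: "\<And>x. 0 \<le> x \<Longrightarrow> 0 \<le> f x"
    and f_deriv: "\<And>x. 0 \<le> x \<Longrightarrow> (f has_real_derivative f' x) (at x within {0..})"
    and f'_cont: "continuous_on {0..} f'"
    and R_nonneg: "0 \<le> R" and f_supp: "\<And>x. R \<le> x \<Longrightarrow> f x = 0"
begin

abbreviation "\<nu> \<equiv> nu_measure \<phi>"
definition "F x = f (max 0 x)"
definition "F' x = f' (max 0 x)"
definition "\<Phi> x = \<phi> (max 0 x)"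
definition "w x = ennreal (\<Phi> x) * indicator {0..} x"

lemma max0_cont: "continuous_on UNIV (\<lambda>x::real. max 0 x)"
  by (intro continuous_intros)

lemma ext_cont: assumes "continuous_on {0..} g" shows "continuous_on UNIV (\<lambda>x::real. g (max 0 x))"
  by (rule continuous_on_compose2[OF assms max0_cont]) auto

lemma f_cont: "continuous_on {0..} f"
  unfolding continuous_on_eq_continuous_within
  using f_deriv has_derivative_continuous[of f] unfolding has_field_derivative_def
  by (metis atLeast_iff continuous_within_subset subset_refl)

lemma F_cont: "continuous_on UNIV F" unfolding F_def by (rule ext_cont[OF f_cont])
lemma F'_cont: "continuous_on UNIV F'" unfolding F'_def by (rule ext_cont[OF f'_cont])
lemma Phi_cont: "continuous_on UNIV \<Phi>" unfolding \<Phi>_def by (rule ext_cont[OF phi_cont])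

lemma F_meas[measurable]: "F \<in> borel_measurable borel" by (rule borel_measurable_continuous_onI[OF F_cont])
lemma F'_meas[measurable]: "F' \<in> borel_measurable borel" by (rule borel_measurable_continuous_onI[OF F'_cont])
lemma Phi_meas[measurable]: "\<Phi> \<in> borel_measurable borel" by (rule borel_measurable_continuous_onI[OF Phi_cont])
lemma w_meas[measurable]: "w \<in> borel_measurable borel" unfolding w_def by measurable

lemma space_nu: "space \<nu> = {0..}"
  unfolding nu_measure_def by simp

lemma sets_nu: "sets \<nu> = sets (restrict_space lborel {0..})"
  unfolding nu_measure_def by simp

lemma sets_nu_borel: "A \<in> sets \<nu> \<Longrightarrow> A \<in> sets borel"
  unfolding sets_nu sets_restrict_space by auto

lemma sets_nuI: "A \<in> sets borel \<Longrightarrow> A \<subseteq> {0..} \<Longrightarrow> A \<in> sets \<nu>"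
  unfolding sets_nu sets_restrict_space by (auto intro!: image_eqI[where x=A])

lemma nn_conv:
  assumes g[measurable]: "g \<in> borel_measurable borel"
  shows "(\<integral>\<^sup>+x. g x \<partial>\<nu>) = (\<integral>\<^sup>+x. w x * g x \<partial>lborel)"
proof -
  have m1: "(\<lambda>x. ennreal (\<phi> x)) \<in> borel_measurable (restrict_space lborel {0..})"
  proof -
    have "(\<lambda>x. ennreal (\<Phi> x)) \<in> borel_measurable (restrict_space lborel {0..})"
      by (rule measurable_restrict_space1) measurable
    thus ?thesis
      by (rule measurable_cong[THEN iffD1, rotated]) (auto simp: \<Phi>_def space_restrict_space)
  qed
  have m2: "g \<in> borel_measurable (restrict_space lborel {0..})"
    by (rule measurable_restrict_space1) measurable
  have "(\<integral>\<^sup>+x. g x \<partial>\<nu>) = (\<integral>\<^sup>+x. ennreal (\<phi> x) * g x \<partial>restrict_space lborel {0..})"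
    unfolding nu_measure_def by (rule nn_integral_density[OF m1 m2])
  also have "\<dots> = (\<integral>\<^sup>+x. ennreal (\<Phi> x) * g x \<partial>restrict_space lborel {0..})"
    by (rule nn_integral_cong) (auto simp: \<Phi>_def space_restrict_space)
  also have "\<dots> = (\<integral>\<^sup>+x. ennreal (\<Phi> x) * g x * indicator {0..} x \<partial>lborel)"
    by (rule nn_integral_restrict_space) simp
  also have "\<dots> = (\<integral>\<^sup>+x. w x * g x \<partial>lborel)"
    by (rule nn_integral_cong) (simp add: w_def mult_ac)
  finally show ?thesis .
qed

lemma emeasure_conv:
  assumes "A \<in> sets \<nu>"
  shows "emeasure \<nu> A = (\<integral>\<^sup>+x. w x * indicator A x \<partial>lborel)"
proof -
  have [measurable]: "A \<in> sets borel" using sets_nu_borel[OF assms] .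
  have "emeasure \<nu> A = (\<integral>\<^sup>+x. indicator A x \<partial>\<nu>)"
    using assms by simp
  also have "\<dots> = (\<integral>\<^sup>+x. w x * indicator A x \<partial>lborel)"
    by (rule nn_conv) measurable
  finally show ?thesis .
qed

lemma nu_Icc_fin: "emeasure \<nu> {0..T} < \<infinity>"
proof -
  obtain B where B: "B \<ge> 0" "\<And>x. x \<in> {0..T} \<Longrightarrow> norm (\<Phi> x) \<le> B"
    using continuous_on_compact_bound[of "{0..T}" \<Phi>] Phi_cont continuous_on_subset by blast
  have "emeasure \<nu> {0..T} = (\<integral>\<^sup>+x. w x * indicator {0..T} x \<partial>lborel)"
    by (rule emeasure_conv) (auto intro!: sets_nuI)
  also have "\<dots> \<le> (\<integral>\<^sup>+x. ennreal B * indicator {0..T} x \<partial>lborel)"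
    using B by (intro nn_integral_mono) (auto simp: w_def indicator_def intro!: ennreal_leI dest!: abs_le_D1)
  also have "\<dots> = ennreal B * emeasure lborel {0..T}"
    by (simp add: nn_integral_cmult_indicator)
  also have "\<dots> < \<infinity>" by (cases "0 \<le> T") (simp_all add: ennreal_mult_less_top)
  finally show ?thesis .
qed

lemma nu_sub_fin: "A \<subseteq> {0..T} \<Longrightarrow> A \<in> sets \<nu> \<Longrightarrow> emeasure \<nu> A < \<infinity>"
  using emeasure_mono[of A "{0..T}" \<nu>] nu_Icc_fin[of T] sets_nuI[of "{0..T}"]
  by (meson atLeastAtMost_iff atLeast_iff borel_closed closed_atLeastAtMost le_less_trans subsetI)

lemma I0: "I 0 = 0"
proof -
  have s: "{} \<in> sets \<nu>" by simp
  have fi: "emeasure \<nu> {} < \<infinity>" by simp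
  have "boundary_measure \<nu> {} \<ge> ereal (I (enn2real (emeasure \<nu> {})))"
    using I_iso s fi unfolding lower_isoperimetric_def by blast
  moreover have "boundary_measure \<nu> {} = 0"
    unfolding boundary_measure_def r_nbhd_def by (simp add: Liminf_const trivial_limit_at_right_real)
  ultimately have "I 0 \<le> 0" by simp
  thus ?thesis using I_nonneg[of 0] by simp
qed

definition "A t = {x. 0 \<le> x \<and> t < f x}"
definition "a t = measure \<nu> (A t)"

lemma A_alt: "A t = {0..} \<inter> {x. t < F x}"
  unfolding A_def F_def by auto

lemma A_sets: "A t \<in> sets \<nu>"
  unfolding A_alt by (rule sets_nuI) auto

lemma A_sub: "0 \<le> t \<Longrightarrow> A t \<subseteq> {0..R}"
  unfolding A_def using f_supp by (auto simp: not_le) (smt (verit) f_supp)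

lemma A_fin: "0 \<le> t \<Longrightarrow> emeasure \<nu> (A t) < \<infinity>"
  using nu_sub_fin[OF A_sub A_sets] .

lemma a_eq: "0 \<le> t \<Longrightarrow> emeasure \<nu> (A t) = ennreal (a t)"
  unfolding a_def using A_fin by (simp add: emeasure_eq_ennreal_measure less_top)

lemma a_nonneg: "0 \<le> a t" unfolding a_def by simp

end
context thm_setup begin

lemma ind_split: "w x * indicator {0..<F x} t = indicator {0..} t * (w x * indicator (A t) x)"
  by (cases "0 \<le> x"; cases "0 \<le> t") (auto simp: w_def indicator_def A_def F_def)

lemma A_borel[measurable]: "A t \<in> sets borel" using sets_nu_borel[OF A_sets] .

lemma pred_Ico[measurable]: "Measurable.pred (borel \<Otimes>\<^sub>M borel) (\<lambda>x::real\<times>real. snd x \<in> {0..<F (fst x)})"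
  unfolding atLeastLessThan_iff by measurable

lemma tonelli:
  assumes g[measurable]: "g \<in> borel_measurable borel"
  shows "(\<integral>\<^sup>+x. w x * (\<integral>\<^sup>+t. g t * indicator {0..<F x} t \<partial>lborel) \<partial>lborel)
       = (\<integral>\<^sup>+t. g t * emeasure \<nu> (A t) * indicator {0..} t \<partial>lborel)"
proof -
  have "(\<integral>\<^sup>+x. w x * (\<integral>\<^sup>+t. g t * indicator {0..<F x} t \<partial>lborel) \<partial>lborel)
      = (\<integral>\<^sup>+x. (\<integral>\<^sup>+t. w x * (g t * indicator {0..<F x} t) \<partial>lborel) \<partial>lborel)"
    by (rule nn_integral_cong, rule nn_integral_cmult[symmetric]) measurable
  also have "\<dots> = (\<integral>\<^sup>+t. (\<integral>\<^sup>+x. w x * (g t * indicator {0..<F x} t) \<partial>lborel) \<partial>lborel)"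
    by (rule lborel_pair.Fubini'[symmetric]) measurable
  also have "\<dots> = (\<integral>\<^sup>+t. g t * indicator {0..} t * (\<integral>\<^sup>+x. w x * indicator (A t) x \<partial>lborel) \<partial>lborel)"
  proof (rule nn_integral_cong)
    fix t :: real
    have "(\<integral>\<^sup>+x. w x * (g t * indicator {0..<F x} t) \<partial>lborel)
        = (\<integral>\<^sup>+x. (g t * indicator {0..} t) * (w x * indicator (A t) x) \<partial>lborel)"
      by (rule nn_integral_cong) (metis ind_split mult.assoc mult.left_commute)
    also have "\<dots> = g t * indicator {0..} t * (\<integral>\<^sup>+x. w x * indicator (A t) x \<partial>lborel)"
      by (intro nn_integral_cmult) measurable
    finally show "(\<integral>\<^sup>+x. w x * (g t * indicator {0..<F x} t) \<partial>lborel)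
        = g t * indicator {0..} t * (\<integral>\<^sup>+x. w x * indicator (A t) x \<partial>lborel)" .
  qed
  also have "\<dots> = (\<integral>\<^sup>+t. g t * emeasure \<nu> (A t) * indicator {0..} t \<partial>lborel)"
    by (rule nn_integral_cong) (simp add: emeasure_conv[OF A_sets] mult_ac)
  finally show ?thesis .
qed

end
context thm_setup begin

lemma F_nonneg: "0 \<le> F x" unfolding F_def using f_nonneg by simp

lemma measurable_nu_cong:
  assumes "g \<in> borel_measurable borel" "\<And>x. 0 \<le> x \<Longrightarrow> h x = g x"
  shows "h \<in> borel_measurable \<nu>"
proof -
  have "g \<in> borel_measurable (restrict_space lborel {0..})"
    by (rule measurable_restrict_space1) (use assms(1) in simp)
  hence "g \<in> borel_measurable \<nu>" by (simp add: measurable_cong_sets[OF sets_nu refl])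
  thus ?thesis by (rule measurable_cong[THEN iffD1, rotated]) (auto simp: space_nu assms(2))
qed

lemma f_meas_nu: "f \<in> borel_measurable \<nu>"
  by (rule measurable_nu_cong[OF F_meas]) (simp add: F_def)

lemma nnf: "(\<integral>\<^sup>+x. ennreal (f x) \<partial>\<nu>) = (\<integral>\<^sup>+x. w x * ennreal (F x) \<partial>lborel)"
proof -
  have "(\<integral>\<^sup>+x. ennreal (f x) \<partial>\<nu>) = (\<integral>\<^sup>+x. ennreal (F x) \<partial>\<nu>)"
    by (rule nn_integral_cong) (simp add: space_nu F_def)
  also have "\<dots> = (\<integral>\<^sup>+x. w x * ennreal (F x) \<partial>lborel)"
    by (rule nn_conv) measurable
  finally show ?thesis .
qed

lemma layer: "(\<integral>\<^sup>+x. ennreal (f x) \<partial>\<nu>) = (\<integral>\<^sup>+t. ennreal (a t) * indicator {0..} t \<partial>lborel)"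
proof -
  have "(\<integral>\<^sup>+x. w x * ennreal (F x) \<partial>lborel) = (\<integral>\<^sup>+x. w x * (\<integral>\<^sup>+t. 1 * indicator {0..<F x} t \<partial>lborel) \<partial>lborel)"
    by (rule nn_integral_cong) (simp add: F_nonneg)
  also have "\<dots> = (\<integral>\<^sup>+t. 1 * emeasure \<nu> (A t) * indicator {0..} t \<partial>lborel)"
    by (rule tonelli) simp
  also have "\<dots> = (\<integral>\<^sup>+t. ennreal (a t) * indicator {0..} t \<partial>lborel)"
    by (rule nn_integral_cong) (auto simp: indicator_def a_eq)
  finally show ?thesis using nnf by simp
qed

lemma nnf_fin: "(\<integral>\<^sup>+x. ennreal (f x) \<partial>\<nu>) < \<infinity>"
proof -
  obtain B where B: "B \<ge> 0" "\<And>x. x \<in> {0..R} \<Longrightarrow> norm (F x) \<le> B"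
    using continuous_on_compact_bound[of "{0..R}" F] F_cont continuous_on_subset by blast
  have "(\<integral>\<^sup>+x. ennreal (f x) \<partial>\<nu>) \<le> (\<integral>\<^sup>+x. ennreal B * indicator {0..R} x \<partial>\<nu>)"
  proof (rule nn_integral_mono)
    fix x assume "x \<in> space \<nu>"
    hence x: "0 \<le> x" by (simp add: space_nu)
    show "ennreal (f x) \<le> ennreal B * indicator {0..R} x"
    proof (cases "x \<le> R")
      case True thus ?thesis using B(2)[of x] x by (auto simp: F_def intro!: ennreal_leI)
    next
      case False thus ?thesis using f_supp[of x] by simp
    qed
  qed
  also have "\<dots> = ennreal B * emeasure \<nu> {0..R}"
    by (rule nn_integral_cmult_indicator) (auto intro: sets_nuI)
  also have "\<dots> < \<infinity>" using nu_Icc_fin[of R] by (simp add: ennreal_mult_less_top)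
  finally show ?thesis .
qed

definition "u = integral\<^sup>L \<nu> f"

lemma f_int: "integrable \<nu> f"
  by (rule integrableI_nonneg[OF f_meas_nu]) (use nnf_fin in \<open>auto simp: space_nu f_nonneg intro!: AE_I2\<close>)

lemma u_eq: "ennreal u = (\<integral>\<^sup>+t. ennreal (a t) * indicator {0..} t \<partial>lborel)"
proof -
  have "(\<integral>\<^sup>+x. ennreal (f x) \<partial>\<nu>) = ennreal u"
    unfolding u_def by (rule nn_integral_eq_integral[OF f_int]) (auto simp: space_nu f_nonneg intro!: AE_I2)
  thus ?thesis using layer by simp
qed

lemma u_nonneg: "0 \<le> u"
  unfolding u_def by (rule integral_nonneg_AE) (auto simp: space_nu f_nonneg intro!: AE_I2)

end
context thm_setup begin

definition "Ie x = I (max 0 x)"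

lemma Ie_mono: "mono Ie"
  unfolding Ie_def mono_def by (auto intro!: concave_mono[OF I_concave I_nonneg])

lemma Ie_meas[measurable]: "Ie \<in> borel_measurable borel"
  by (rule borel_measurable_mono[OF Ie_mono])

lemma a_alt: "a t = enn2real (\<integral>\<^sup>+x. w x * indicator (A t) x \<partial>lborel)"
  unfolding a_def measure_def by (simp add: emeasure_conv[OF A_sets])

lemma pred_A[measurable]: "Measurable.pred (borel \<Otimes>\<^sub>M borel) (\<lambda>p::real\<times>real. snd p \<in> A (fst p))"
  unfolding A_alt by simp

lemma a_meas[measurable]: "a \<in> borel_measurable borel"
proof -
  have "(\<lambda>t. enn2real (\<integral>\<^sup>+x. w x * indicator (A t) x \<partial>lborel)) \<in> borel_measurable borel"
    by measurable
  thus ?thesis by (simp add: a_alt[abs_def])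
qed

definition "h t = (if 0 < a t then (a t / u) * Ie (u / a t) else 0)"

lemma h_meas[measurable]: "h \<in> borel_measurable borel"
  unfolding h_def by measurable

lemma h_nonneg: "0 \<le> u \<Longrightarrow> 0 \<le> h t"
  unfolding h_def Ie_def using I_nonneg a_nonneg by simp

lemma jensen_pt:
  assumes u: "0 < u" and y: "0 \<le> y"
  shows "(\<integral>\<^sup>+t. ennreal (h t) * indicator {0..<y} t \<partial>lborel) \<le> ennreal (I y)"
proof (cases "y = 0")
  case True thus ?thesis by simp
next
  case False
  hence y: "0 < y" using y by simp
  obtain k where k: "k \<ge> 0" "\<And>v. v \<ge> 0 \<Longrightarrow> I v \<le> I y + k * (v - y)"
    using concave_support[OF I_concave I_nonneg y] by blast
  define c where "c = I y - k * y"
  have c: "0 \<le> c" using k(2)[of 0] I0 unfolding c_def by simp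
  have pt: "h t \<le> k + (c / u) * a t" for t
  proof (cases "0 < a t")
    case True
    have uv: "0 \<le> u / a t" using u True by simp
    have "h t = (a t / u) * I (u / a t)" unfolding h_def Ie_def using True uv by simp
    also have "\<dots> \<le> (a t / u) * (I y + k * (u / a t - y))"
      using k(2)[OF uv] True u by (intro mult_left_mono) auto
    also have "\<dots> = k + (c / u) * a t"
      using True u by (simp add: c_def field_simps)
    finally show ?thesis .
  next
    case False thus ?thesis unfolding h_def using k c u a_nonneg[of t] by simp
  qed
  have "(\<integral>\<^sup>+t. ennreal (h t) * indicator {0..<y} t \<partial>lborel)
      \<le> (\<integral>\<^sup>+t. ennreal k * indicator {0..<y} t + ennreal (c / u) * (ennreal (a t) * indicator {0..<y} t) \<partial>lborel)"
  proof (rule nn_integral_mono)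
    fix t
    have "ennreal (h t) \<le> ennreal (k + (c / u) * a t)" by (rule ennreal_leI) (rule pt)
    also have "\<dots> = ennreal k + ennreal (c / u) * ennreal (a t)"
      using k c u a_nonneg[of t] by (simp add: ennreal_plus ennreal_mult[symmetric] del: times_divide_eq_left)
    finally have "ennreal (h t) \<le> ennreal k + ennreal (c / u) * ennreal (a t)" .
    thus "ennreal (h t) * indicator {0..<y} t
        \<le> ennreal k * indicator {0..<y} t + ennreal (c / u) * (ennreal (a t) * indicator {0..<y} t)"
      by (auto simp: indicator_def)
  qed
  also have "\<dots> = ennreal k * ennreal y + ennreal (c / u) * (\<integral>\<^sup>+t. ennreal (a t) * indicator {0..<y} t \<partial>lborel)"
    using y by (subst nn_integral_add) (auto simp: nn_integral_cmult nn_integral_cmult_indicator)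
  also have "\<dots> \<le> ennreal k * ennreal y + ennreal (c / u) * ennreal u"
  proof -
    have "(\<integral>\<^sup>+t. ennreal (a t) * indicator {0..<y} t \<partial>lborel) \<le> (\<integral>\<^sup>+t. ennreal (a t) * indicator {0..} t \<partial>lborel)"
      by (intro nn_integral_mono) (auto simp: indicator_def)
    thus ?thesis using u_eq by (intro add_left_mono mult_left_mono) auto
  qed
  also have "\<dots> = ennreal (k * y + (c / u) * u)"
  proof -
    have "ennreal k * ennreal y = ennreal (k * y)" using k y by (simp add: ennreal_mult)
    moreover have "ennreal (c / u) * ennreal u = ennreal ((c / u) * u)"
      using c u by (intro ennreal_mult[symmetric]) auto
    moreover have "ennreal (k * y) + ennreal ((c / u) * u) = ennreal (k * y + (c / u) * u)"
      using k y c u by (intro ennreal_plus[symmetric]) auto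
    ultimately show ?thesis by simp
  qed
  also have "k * y + (c / u) * u = I y" using u by (simp add: c_def)
  finally show ?thesis .
qed

lemma jensen_total:
  assumes u: "0 < u"
  shows "(\<integral>\<^sup>+t. ennreal (h t * a t) * indicator {0..} t \<partial>lborel) \<le> (\<integral>\<^sup>+x. ennreal (I (f x)) \<partial>\<nu>)"
proof -
  have "(\<integral>\<^sup>+t. ennreal (h t * a t) * indicator {0..} t \<partial>lborel)
      = (\<integral>\<^sup>+t. ennreal (h t) * emeasure \<nu> (A t) * indicator {0..} t \<partial>lborel)"
    using u by (intro nn_integral_cong) (auto simp: indicator_def a_eq ennreal_mult[OF h_nonneg a_nonneg])
  also have "\<dots> = (\<integral>\<^sup>+x. w x * (\<integral>\<^sup>+t. ennreal (h t) * indicator {0..<F x} t \<partial>lborel) \<partial>lborel)"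
    by (rule tonelli[symmetric]) measurable
  also have "\<dots> \<le> (\<integral>\<^sup>+x. w x * ennreal (Ie (F x)) \<partial>lborel)"
    using jensen_pt[OF u F_nonneg] F_nonneg
    by (intro nn_integral_mono mult_left_mono) (auto simp: Ie_def)
  also have "\<dots> = (\<integral>\<^sup>+x. ennreal (Ie (F x)) \<partial>\<nu>)"
    by (rule nn_conv[symmetric]) measurable
  also have "\<dots> = (\<integral>\<^sup>+x. ennreal (I (f x)) \<partial>\<nu>)"
    by (rule nn_integral_cong) (auto simp: space_nu Ie_def F_def f_nonneg)
  finally show ?thesis .
qed

end
context thm_setup begin

definition "N r t = r_nbhd (A t) r"

lemma N_alt: "N r t = {0..} \<inter> (\<Union>y\<in>A t. ball y r)"
  unfolding N_def r_nbhd_def by (auto simp: dist_real_def abs_minus_commute)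

lemma N_sets: "N r t \<in> sets \<nu>"
proof -
  have "(\<Union>y\<in>A t. ball y r) \<in> sets borel" by (intro borel_open open_UN) auto
  hence "{0..} \<inter> (\<Union>y\<in>A t. ball y r) \<in> sets borel" by (intro sets.Int) auto
  thus ?thesis unfolding N_alt by (rule sets_nuI) auto
qed

lemma A_sub_N: "0 < r \<Longrightarrow> A t \<subseteq> N r t"
  unfolding N_def r_nbhd_def A_def by force

lemma N_sub: assumes "0 \<le> t" "r \<le> 1" shows "N r t \<subseteq> {0..R+1}"
proof
  fix x assume "x \<in> N r t"
  then obtain y where y: "y \<in> A t" "\<bar>x - y\<bar> < r" "0 \<le> x" unfolding N_def r_nbhd_def by auto
  have "y \<le> R" using A_sub[OF assms(1)] y(1) by auto
  thus "x \<in> {0..R+1}" using y assms by auto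
qed

lemma N_fin: "0 \<le> t \<Longrightarrow> r \<le> 1 \<Longrightarrow> emeasure \<nu> (N r t) < \<infinity>"
  using nu_sub_fin[OF N_sub N_sets] .

lemma rat_approx:
  assumes "0 \<le> y" "t < F y" "\<bar>x - y\<bar> < r"
  shows "\<exists>q\<in>\<rat>. 0 \<le> q \<and> t < F q \<and> \<bar>x - q\<bar> < r"
proof -
  have o1: "open {z. t < F z}" by (rule open_Collect_less) (auto intro: continuous_on_const F_cont)
  have eq: "{z. t < F z \<and> \<bar>x - z\<bar> < r} = {z. t < F z} \<inter> ball x r"
    by (auto simp: dist_real_def)
  have "open {z. t < F z \<and> \<bar>x - z\<bar> < r}" unfolding eq using o1 by auto
  moreover have "y \<in> {z. t < F z \<and> \<bar>x - z\<bar> < r}" using assms by auto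
  ultimately obtain e where e: "e > 0" "ball y e \<subseteq> {z. t < F z \<and> \<bar>x - z\<bar> < r}"
    by (meson openE)
  obtain q where q: "q \<in> \<rat>" "y < q" "q < y + e" using Rats_dense_in_real[of y "y + e"] e by auto
  have "q \<in> ball y e" using q by (auto simp: dist_real_def)
  thus ?thesis using e q assms(1) by (intro bexI[of _ q]) auto
qed

definition "E r t = N r t - A t"

lemma E_iff: "0 < r \<Longrightarrow> x \<in> E r t \<longleftrightarrow> 0 \<le> x \<and> \<not> t < F x \<and> (\<exists>q\<in>\<rat>. 0 \<le> q \<and> t < F q \<and> \<bar>x - q\<bar> < r)"
proof -
  have "x \<in> E r t \<longleftrightarrow> 0 \<le> x \<and> \<not> t < F x \<and> (\<exists>y. 0 \<le> y \<and> t < F y \<and> \<bar>x - y\<bar> < r)"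
    unfolding E_def N_def r_nbhd_def A_def F_def by auto
  also have "\<dots> \<longleftrightarrow> 0 \<le> x \<and> \<not> t < F x \<and> (\<exists>q\<in>\<rat>. 0 \<le> q \<and> t < F q \<and> \<bar>x - q\<bar> < r)"
    using rat_approx by (meson Rats_def)
  finally show ?thesis .
qed

lemma pred_E:
  assumes "0 < r"
  shows "Measurable.pred (borel \<Otimes>\<^sub>M borel) (\<lambda>p::real\<times>real. snd p \<in> E r (fst p))"
proof -
  have "Measurable.pred (borel \<Otimes>\<^sub>M borel) (\<lambda>p::real\<times>real. 0 \<le> snd p \<and> \<not> fst p < F (snd p) \<and>
          (\<exists>q\<in>\<rat>. 0 \<le> q \<and> fst p < F q \<and> \<bar>snd p - q\<bar> < r))"
    using countable_rat by measurable
  thus ?thesis using E_iff[OF assms] by simp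
qed

end
context thm_setup begin

lemma mvt_step:
  assumes "0 \<le> x" "x \<le> y"
  shows "\<exists>z\<in>{x..y}. f y - f x = f' z * (y - x)"
proof -
  have "\<And>z. x \<le> z \<Longrightarrow> z \<le> y \<Longrightarrow> (f has_derivative (\<lambda>h. f' z * h)) (at z within {x..y})"
    using f_deriv assms unfolding has_field_derivative_def
    by (meson atLeast_iff atLeastAtMost_iff dual_order.trans has_derivative_subset subsetI)
  from mvt_very_simple[OF assms(2) this] show ?thesis by simp
qed

lemma mvt_bound:
  assumes e: "0 < e"
  obtains d where "0 < d" "d \<le> 1"
    "\<And>x y. 0 \<le> x \<Longrightarrow> x \<le> R + 1 \<Longrightarrow> 0 \<le> y \<Longrightarrow> \<bar>y - x\<bar> < d \<Longrightarrow> f y - f x \<le> \<bar>y - x\<bar> * (\<bar>f' x\<bar> + e)"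
proof -
  have "uniformly_continuous_on {0..R+2} f'"
    by (rule compact_uniformly_continuous[OF continuous_on_subset[OF f'_cont]]) auto
  then obtain d0 where d0: "d0 > 0" "\<And>x x'. x \<in> {0..R+2} \<Longrightarrow> x' \<in> {0..R+2} \<Longrightarrow> dist x' x < d0 \<Longrightarrow> dist (f' x') (f' x) < e"
    using uniformly_continuous_onE[OF _ e] by metis
  define d where "d = min d0 1"
  have key: "\<bar>f' z\<bar> \<le> \<bar>f' x\<bar> + e" if "0 \<le> x" "x \<le> R + 1" "0 \<le> z" "\<bar>z - x\<bar> < d" for x z
  proof -
    have "z \<le> R + 2" using that unfolding d_def by auto
    hence "dist (f' z) (f' x) < e" using that d0(2)[of x z] unfolding d_def by (auto simp: dist_real_def)
    thus ?thesis by (auto simp: dist_real_def)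
  qed
  show ?thesis
  proof (rule that[of d])
    show "0 < d" "d \<le> 1" using d0 unfolding d_def by auto
    fix x y assume xy: "0 \<le> x" "x \<le> R + 1" "0 \<le> y" "\<bar>y - x\<bar> < d"
    show "f y - f x \<le> \<bar>y - x\<bar> * (\<bar>f' x\<bar> + e)"
    proof (cases "x \<le> y")
      case True
      then obtain z where z: "z \<in> {x..y}" "f y - f x = f' z * (y - x)" using mvt_step[OF xy(1)] by blast
      have "\<bar>z - x\<bar> < d" using z xy by auto
      hence "\<bar>f' z\<bar> \<le> \<bar>f' x\<bar> + e" using key[of x z] xy z by auto
      moreover have "f' z * (y - x) \<le> \<bar>f' z\<bar> * \<bar>y - x\<bar>" by (metis abs_ge_self abs_mult)
      ultimately show ?thesis using z by (smt (verit) abs_ge_zero mult.commute mult_right_mono)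
    next
      case False
      then obtain z where z: "z \<in> {y..x}" "f x - f y = f' z * (x - y)" using mvt_step[OF xy(3), of x] False by auto
      have "\<bar>z - x\<bar> < d" using z xy False by auto
      hence "\<bar>f' z\<bar> \<le> \<bar>f' x\<bar> + e" using key[of x z] xy z by auto
      moreover have "- (f' z * (x - y)) \<le> \<bar>f' z\<bar> * \<bar>y - x\<bar>"
        by (metis abs_ge_minus_self abs_minus_commute abs_mult)
      ultimately show ?thesis using z by (smt (verit) abs_ge_zero mult.commute mult_right_mono)
    qed
  qed
qed

end
context thm_setup begin

lemma pred_E2:
  assumes "0 < r"
  shows "Measurable.pred (borel \<Otimes>\<^sub>M borel) (\<lambda>p::real\<times>real. fst p \<in> E r (snd p))"
proof -
  have "Measurable.pred (borel \<Otimes>\<^sub>M borel) (\<lambda>p::real\<times>real. 0 \<le> fst p \<and> \<not> snd p < F (fst p) \<and>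
          (\<exists>q\<in>\<rat>. 0 \<le> q \<and> snd p < F q \<and> \<bar>fst p - q\<bar> < r))"
    using countable_rat by measurable
  thus ?thesis using E_iff[OF assms] by simp
qed

lemma E_sets: "E r t \<in> sets \<nu>"
  unfolding E_def using N_sets A_sets by auto

lemma E_sec:
  assumes e: "0 < e" and dprop: "\<And>x y. 0 \<le> x \<Longrightarrow> x \<le> R + 1 \<Longrightarrow> 0 \<le> y \<Longrightarrow> \<bar>y - x\<bar> < d \<Longrightarrow> f y - f x \<le> \<bar>y - x\<bar> * (\<bar>f' x\<bar> + e)"
    and r: "0 < r" "r \<le> d" and dle: "d \<le> 1" and t: "0 \<le> t" and x: "x \<in> E r t"
  shows "x \<le> R + 1" "F x \<le> t" "t < F x + r * (\<bar>F' x\<bar> + e)"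
proof -
  from x obtain y where y: "y \<in> A t" "\<bar>x - y\<bar> < r" "0 \<le> x" "\<not> t < f x"
    unfolding E_def N_def r_nbhd_def A_def by auto
  have yR: "y \<le> R" using A_sub[OF t] y(1) by auto
  hence "x \<le> R + r" using y by auto
  show xR: "x \<le> R + 1"
  proof (rule ccontr)
    assume "\<not> x \<le> R + 1"
    hence "R < y" using y(2) r dle by auto
    thus False using yR by simp
  qed
  show "F x \<le> t" using y unfolding F_def by simp
  have y0: "0 \<le> y" using y(1) unfolding A_def by simp
  have "\<bar>y - x\<bar> < d" using y(2) r by (simp add: abs_minus_commute)
  hence "f y - f x \<le> \<bar>y - x\<bar> * (\<bar>f' x\<bar> + e)"
    using dprop[OF y(3) xR y0] by simp
  also have "\<dots> \<le> r * (\<bar>f' x\<bar> + e)"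
    using y(2) e by (intro mult_right_mono) (auto simp: abs_minus_commute)
  finally show "t < F x + r * (\<bar>F' x\<bar> + e)"
    using y(1) y(3) unfolding A_def F_def F'_def by simp
qed

end
context thm_setup begin

lemma int_bound:
  assumes e: "0 < e" and dprop: "\<And>x y. 0 \<le> x \<Longrightarrow> x \<le> R + 1 \<Longrightarrow> 0 \<le> y \<Longrightarrow> \<bar>y - x\<bar> < d \<Longrightarrow> f y - f x \<le> \<bar>y - x\<bar> * (\<bar>f' x\<bar> + e)"
    and r: "0 < r" "r \<le> d" and dle: "d \<le> 1"
  shows "(\<integral>\<^sup>+t. emeasure \<nu> (E r t) * ennreal (1 / r) * indicator {0..} t \<partial>lborel)
       \<le> (\<integral>\<^sup>+x. ennreal \<bar>f' x\<bar> \<partial>\<nu>) + ennreal e * emeasure \<nu> {0..R+1}"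
proof -
  have [measurable]: "Measurable.pred (borel \<Otimes>\<^sub>M borel) (\<lambda>p::real\<times>real. fst p \<in> E r (snd p))"
    using pred_E2[OF r(1)] .
  have "(\<integral>\<^sup>+t. emeasure \<nu> (E r t) * ennreal (1 / r) * indicator {0..} t \<partial>lborel)
      = (\<integral>\<^sup>+t. (\<integral>\<^sup>+x. w x * indicator (E r t) x * ennreal (1 / r) * indicator {0..} t \<partial>lborel) \<partial>lborel)"
  proof (rule nn_integral_cong)
    fix t
    have [measurable]: "E r t \<in> sets borel" using sets_nu_borel[OF E_sets] .
    show "emeasure \<nu> (E r t) * ennreal (1 / r) * indicator {0..} t
        = (\<integral>\<^sup>+x. w x * indicator (E r t) x * ennreal (1 / r) * indicator {0..} t \<partial>lborel)"
      unfolding emeasure_conv[OF E_sets] by (subst nn_integral_multc; simp?)+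
  qed
  also have "\<dots> = (\<integral>\<^sup>+x. (\<integral>\<^sup>+t. w x * indicator (E r t) x * ennreal (1 / r) * indicator {0..} t \<partial>lborel) \<partial>lborel)"
    by (rule lborel_pair.Fubini') measurable
  also have "\<dots> \<le> (\<integral>\<^sup>+x. (\<integral>\<^sup>+t. w x * ennreal (1 / r) * indicator {..R+1} x * indicator {F x..<F x + r * (\<bar>F' x\<bar> + e)} t \<partial>lborel) \<partial>lborel)"
  proof (intro nn_integral_mono)
    fix x t :: real
    show "w x * indicator (E r t) x * ennreal (1 / r) * indicator {0..} t
        \<le> w x * ennreal (1 / r) * indicator {..R+1} x * indicator {F x..<F x + r * (\<bar>F' x\<bar> + e)} t"
    proof (cases "0 \<le> t \<and> x \<in> E r t")
      case True
      hence "x \<le> R + 1" "F x \<le> t" "t < F x + r * (\<bar>F' x\<bar> + e)"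
        using E_sec[OF e dprop r dle] by auto
      thus ?thesis using True by (simp add: indicator_def mult_ac)
    next
      case False thus ?thesis by (auto simp: indicator_def)
    qed
  qed
  also have "\<dots> = (\<integral>\<^sup>+x. w x * ennreal (1 / r) * indicator {..R+1} x * ennreal (r * (\<bar>F' x\<bar> + e)) \<partial>lborel)"
  proof (rule nn_integral_cong)
    fix x
    have "r * (\<bar>F' x\<bar> + e) \<ge> 0" using r e by simp
    thus "(\<integral>\<^sup>+t. w x * ennreal (1 / r) * indicator {..R+1} x * indicator {F x..<F x + r * (\<bar>F' x\<bar> + e)} t \<partial>lborel)
        = w x * ennreal (1 / r) * indicator {..R+1} x * ennreal (r * (\<bar>F' x\<bar> + e))"
      by (subst nn_integral_cmult) auto
  qed
  also have "\<dots> = (\<integral>\<^sup>+x. w x * ennreal \<bar>F' x\<bar> * indicator {..R+1} x + ennreal e * (w x * indicator {0..R+1} x) \<partial>lborel)"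
  proof (rule nn_integral_cong)
    fix x
    have "ennreal (1 / r) * ennreal (r * (\<bar>F' x\<bar> + e)) = ennreal (\<bar>F' x\<bar> + e)"
      using r e by (simp add: ennreal_mult[symmetric])
    also have "\<dots> = ennreal \<bar>F' x\<bar> + ennreal e" using e by (simp add: ennreal_plus)
    finally have *: "ennreal (1 / r) * ennreal (r * (\<bar>F' x\<bar> + e)) = ennreal \<bar>F' x\<bar> + ennreal e" .
    have "w x * ennreal (1 / r) * indicator {..R+1} x * ennreal (r * (\<bar>F' x\<bar> + e))
        = w x * indicator {..R+1} x * (ennreal (1 / r) * ennreal (r * (\<bar>F' x\<bar> + e)))"
      by (simp add: mult_ac)
    also have "\<dots> = w x * ennreal \<bar>F' x\<bar> * indicator {..R+1} x + ennreal e * (w x * indicator {0..R+1} x)"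
      unfolding * by (auto simp: indicator_def w_def distrib_left mult_ac)
    finally show "w x * ennreal (1 / r) * indicator {..R+1} x * ennreal (r * (\<bar>F' x\<bar> + e))
        = w x * ennreal \<bar>F' x\<bar> * indicator {..R+1} x + ennreal e * (w x * indicator {0..R+1} x)" .
  qed
  also have "\<dots> = (\<integral>\<^sup>+x. w x * ennreal \<bar>F' x\<bar> * indicator {..R+1} x \<partial>lborel) + ennreal e * (\<integral>\<^sup>+x. w x * indicator {0..R+1} x \<partial>lborel)"
    by (subst nn_integral_add) (auto simp: nn_integral_cmult)
  also have "\<dots> \<le> (\<integral>\<^sup>+x. w x * ennreal \<bar>F' x\<bar> \<partial>lborel) + ennreal e * (\<integral>\<^sup>+x. w x * indicator {0..R+1} x \<partial>lborel)"
    by (intro add_right_mono nn_integral_mono) (auto simp: indicator_def)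
  also have "\<dots> = (\<integral>\<^sup>+x. ennreal \<bar>f' x\<bar> \<partial>\<nu>) + ennreal e * emeasure \<nu> {0..R+1}"
  proof -
    have "(\<integral>\<^sup>+x. ennreal \<bar>f' x\<bar> \<partial>\<nu>) = (\<integral>\<^sup>+x. ennreal \<bar>F' x\<bar> \<partial>\<nu>)"
      by (rule nn_integral_cong) (simp add: space_nu F'_def)
    also have "\<dots> = (\<integral>\<^sup>+x. w x * ennreal \<bar>F' x\<bar> \<partial>lborel)" by (rule nn_conv) measurable
    finally show ?thesis by (simp add: emeasure_conv[OF sets_nuI] del: atLeastAtMost_iff)
  qed
  finally show ?thesis .
qed

end

lemma Liminf_filter_anti:
  fixes f :: "'a \<Rightarrow> 'b::complete_lattice"
  assumes "F \<le> G" shows "Liminf G f \<le> Liminf F f"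
  unfolding Liminf_def by (rule SUP_subset_mono) (auto intro: filter_leD[OF assms])

context thm_setup begin

definition "rr n = (1/2) * inverse (real (Suc n))"

lemma rr_pos: "0 < rr n" unfolding rr_def by simp
lemma rr_le: "rr n \<le> 1" unfolding rr_def by (simp add: field_simps)
lemma rr_tendsto: "rr \<longlonglongrightarrow> 0"
  unfolding rr_def[abs_def] by (rule tendsto_mult_right_zero[OF LIMSEQ_inverse_real_of_nat])
lemma rr_filterlim: "filterlim rr (at_right 0) sequentially"
proof -
  have "\<forall>n. rr n \<in> {0<..} \<and> rr n \<noteq> 0" using rr_pos by (metis greaterThan_iff less_irrefl)
  thus ?thesis unfolding filterlim_at using rr_tendsto by (auto intro: always_eventually)
qed

lemma G_eq:
  assumes t: "0 \<le> t" and r: "0 < r" "r \<le> 1"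
  shows "(enn2ereal (emeasure \<nu> (r_nbhd (A t) r)) - enn2ereal (emeasure \<nu> (A t))) / ereal r
       = enn2ereal (emeasure \<nu> (E r t) * ennreal (1 / r))"
proof -
  have un: "A t \<union> E r t = N r t" using A_sub_N[OF r(1)] unfolding E_def by auto
  have "emeasure \<nu> (A t) + emeasure \<nu> (E r t) = emeasure \<nu> (N r t)"
    unfolding un[symmetric] by (rule plus_emeasure[OF A_sets E_sets]) (auto simp: E_def)
  hence eq: "emeasure \<nu> (N r t) = ennreal (a t) + emeasure \<nu> (E r t)" using a_eq[OF t] by simp
  define Y where "Y = enn2ereal (emeasure \<nu> (E r t))"
  have Y: "0 \<le> Y" unfolding Y_def by simp
  have "(enn2ereal (emeasure \<nu> (r_nbhd (A t) r)) - enn2ereal (emeasure \<nu> (A t))) / ereal r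
      = ((ereal (a t) + Y) - ereal (a t)) / ereal r"
    unfolding N_def[symmetric] eq a_eq[OF t] Y_def using a_nonneg[of t]
    by (simp add: plus_ennreal.rep_eq)
  also have "\<dots> = Y * ereal (1 / r)"
    using Y r by (cases Y) (auto simp: divide_ereal_def divide_inverse)
  also have "\<dots> = enn2ereal (emeasure \<nu> (E r t) * ennreal (1 / r))"
    unfolding Y_def using r by (simp add: times_ennreal.rep_eq)
  finally show ?thesis .
qed

definition "Dn n t = emeasure \<nu> (E (rr n) t) * ennreal (1 / rr n)"

lemma bnd:
  assumes t: "0 \<le> t"
  shows "ennreal (Ie (a t)) \<le> liminf (\<lambda>n. Dn n t)"
proof -
  define G where "G = (\<lambda>r. (enn2ereal (emeasure \<nu> (r_nbhd (A t) r)) - enn2ereal (emeasure \<nu> (A t))) / ereal r)"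
  have "ereal (I (enn2real (emeasure \<nu> (A t)))) \<le> boundary_measure \<nu> (A t)"
    using I_iso A_sets A_fin[OF t] unfolding lower_isoperimetric_def by blast
  hence "ereal (I (a t)) \<le> Liminf (at_right 0) G"
    unfolding boundary_measure_def G_def a_def measure_def .
  also have "\<dots> \<le> Liminf (filtermap rr sequentially) G"
    by (rule Liminf_filter_anti) (use rr_filterlim in \<open>simp add: filterlim_def\<close>)
  also have "\<dots> \<le> liminf (\<lambda>n. G (rr n))" by (rule Liminf_filtermap_le)
  also have "\<dots> = liminf (\<lambda>n. enn2ereal (Dn n t))"
    unfolding G_def Dn_def using G_eq[OF t rr_pos rr_le] by simp
  finally have le: "ereal (I (a t)) \<le> liminf (\<lambda>n. enn2ereal (Dn n t))" .
  have "ennreal (Ie (a t)) = e2ennreal (ereal (I (a t)))" unfolding Ie_def using a_nonneg[of t] by simp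
  also have "\<dots> \<le> e2ennreal (liminf (\<lambda>n. enn2ereal (Dn n t)))" by (rule e2ennreal_mono[OF le])
  also have "\<dots> = liminf (\<lambda>n. e2ennreal (enn2ereal (Dn n t)))"
    by (rule Liminf_compose_continuous_mono[symmetric])
       (auto simp: continuous_on_e2ennreal mono_def e2ennreal_mono)
  also have "\<dots> = liminf (\<lambda>n. Dn n t)" by simp
  finally show ?thesis .
qed

lemma Dn_meas[measurable]: "Dn n \<in> borel_measurable borel"
proof -
  note pred_E[OF rr_pos[of n], measurable]
  have "(\<lambda>t. (\<integral>\<^sup>+x. w x * indicator (E (rr n) t) x \<partial>lborel) * ennreal (1 / rr n)) \<in> borel_measurable borel"
    by measurable
  thus ?thesis unfolding Dn_def emeasure_conv[OF E_sets] .
qed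

lemma coarea2: "(\<integral>\<^sup>+t. ennreal (Ie (a t)) * indicator {0..} t \<partial>lborel) \<le> (\<integral>\<^sup>+x. ennreal \<bar>f' x\<bar> \<partial>\<nu>)"
proof -
  have "(\<integral>\<^sup>+t. ennreal (Ie (a t)) * indicator {0..} t \<partial>lborel)
      \<le> (\<integral>\<^sup>+t. liminf (\<lambda>n. Dn n t * indicator {0..} t) \<partial>lborel)"
  proof (rule nn_integral_mono)
    fix t :: real
    show "ennreal (Ie (a t)) * indicator {0..} t \<le> liminf (\<lambda>n. Dn n t * indicator {0..} t)"
      using bnd[of t] by (cases "0 \<le> t") auto
  qed
  also have "\<dots> \<le> liminf (\<lambda>n. \<integral>\<^sup>+t. Dn n t * indicator {0..} t \<partial>lborel)"
    by (rule nn_integral_liminf) measurable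
  also have "\<dots> \<le> (\<integral>\<^sup>+x. ennreal \<bar>f' x\<bar> \<partial>\<nu>)"
  proof (rule ennreal_le_epsilon)
    fix e' :: real assume e': "0 < e'"
    obtain Kr where Kr: "emeasure \<nu> {0..R+1} = ennreal Kr" "0 \<le> Kr"
      using nu_Icc_fin[of "R+1"] by (cases "emeasure \<nu> {0..R+1}") auto
    define e where "e = e' / (Kr + 1)"
    have e: "0 < e" using e' Kr unfolding e_def by simp
    have eK: "e * Kr \<le> e'"
      using e' Kr unfolding e_def by (simp add: field_simps)
    obtain d where d: "0 < d" "d \<le> 1"
      "\<And>x y. 0 \<le> x \<Longrightarrow> x \<le> R + 1 \<Longrightarrow> 0 \<le> y \<Longrightarrow> \<bar>y - x\<bar> < d \<Longrightarrow> f y - f x \<le> \<bar>y - x\<bar> * (\<bar>f' x\<bar> + e)"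
      using mvt_bound[OF e] by blast
    have ev: "eventually (\<lambda>n. rr n < d) sequentially" using order_tendstoD(2)[OF rr_tendsto d(1)] .
    have "liminf (\<lambda>n. \<integral>\<^sup>+t. Dn n t * indicator {0..} t \<partial>lborel) \<le> (\<integral>\<^sup>+x. ennreal \<bar>f' x\<bar> \<partial>\<nu>) + ennreal e * emeasure \<nu> {0..R+1}"
    proof (rule Liminf_le)
      show "eventually (\<lambda>n. (\<integral>\<^sup>+t. Dn n t * indicator {0..} t \<partial>lborel) \<le> (\<integral>\<^sup>+x. ennreal \<bar>f' x\<bar> \<partial>\<nu>) + ennreal e * emeasure \<nu> {0..R+1}) sequentially"
        using ev
      proof eventually_elim
        case (elim n)
        show ?case unfolding Dn_def
          by (rule int_bound[OF e d(3) rr_pos _ d(2)]) (use elim in auto)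
      qed
    qed simp
    also have "\<dots> \<le> (\<integral>\<^sup>+x. ennreal \<bar>f' x\<bar> \<partial>\<nu>) + ennreal e'"
      unfolding Kr using e Kr eK by (intro add_left_mono) (simp add: ennreal_mult[symmetric] ennreal_leI)
    finally show "liminf (\<lambda>n. \<integral>\<^sup>+t. Dn n t * indicator {0..} t \<partial>lborel) \<le> (\<integral>\<^sup>+x. ennreal \<bar>f' x\<bar> \<partial>\<nu>) + ennreal e'" .
  qed
  finally show ?thesis .
qed

end
context thm_setup begin


lemma pt_ineq:
  assumes u: "0 < u"
  shows "C * I u / u * a t \<le> h t * a t + Ie (a t)"
proof (cases "0 < a t")
  case False
  hence "a t = 0" using a_nonneg[of t] by simp
  thus ?thesis unfolding h_def Ie_def by (simp add: I0)
next
  case True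
  have ua: "0 \<le> u / a t" using u True by simp
  have "C * I ((u / a t) * a t) \<le> a t * I (u / a t) + (u / a t) * I (a t)"
    using I_mult[OF ua a_nonneg] .
  hence "C * I u \<le> a t * I (u / a t) + (u / a t) * I (a t)" using True by simp
  hence "(a t / u) * (C * I u) \<le> (a t / u) * (a t * I (u / a t) + (u / a t) * I (a t))"
    using True u by (intro mult_left_mono) auto
  also have "\<dots> = h t * a t + Ie (a t)"
    unfolding h_def Ie_def using True u ua by (simp add: field_simps)
  finally show ?thesis by (simp add: field_simps)
qed

lemma main: "ennreal (C * I u) \<le> (\<integral>\<^sup>+x. ennreal (I (f x)) \<partial>\<nu>) + (\<integral>\<^sup>+x. ennreal \<bar>f' x\<bar> \<partial>\<nu>)"
proof (cases "u = 0")
  case True thus ?thesis by (simp add: I0)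
next
  case False
  hence u: "0 < u" using u_nonneg by simp
  have CI: "0 \<le> C * I u / u" using C_pos I_nonneg[of u] u by simp
  have "ennreal (C * I u) = ennreal (C * I u / u) * ennreal u"
    using CI u by (simp add: ennreal_mult[symmetric])
  also have "\<dots> = (\<integral>\<^sup>+t. ennreal (C * I u / u) * (ennreal (a t) * indicator {0..} t) \<partial>lborel)"
    unfolding u_eq by (rule nn_integral_cmult[symmetric]) measurable
  also have "\<dots> \<le> (\<integral>\<^sup>+t. ennreal (h t * a t) * indicator {0..} t + ennreal (Ie (a t)) * indicator {0..} t \<partial>lborel)"
  proof (rule nn_integral_mono)
    fix t
    have "ennreal (C * I u / u) * ennreal (a t) = ennreal (C * I u / u * a t)"
      by (simp only: ennreal_mult[OF CI a_nonneg])
    also have "\<dots> \<le> ennreal (h t * a t + Ie (a t))" by (rule ennreal_leI[OF pt_ineq[OF u]])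
    also have "\<dots> = ennreal (h t * a t) + ennreal (Ie (a t))"
      using h_nonneg[of t] u a_nonneg[of t] I_nonneg[of "max 0 (a t)"]
      by (intro ennreal_plus) (auto simp: Ie_def)
    finally show "ennreal (C * I u / u) * (ennreal (a t) * indicator {0..} t)
        \<le> ennreal (h t * a t) * indicator {0..} t + ennreal (Ie (a t)) * indicator {0..} t"
      by (auto simp: indicator_def mult.assoc[symmetric])
  qed
  also have "\<dots> = (\<integral>\<^sup>+t. ennreal (h t * a t) * indicator {0..} t \<partial>lborel) + (\<integral>\<^sup>+t. ennreal (Ie (a t)) * indicator {0..} t \<partial>lborel)"
    by (rule nn_integral_add) measurable
  also have "\<dots> \<le> (\<integral>\<^sup>+x. ennreal (I (f x)) \<partial>\<nu>) + (\<integral>\<^sup>+x. ennreal \<bar>f' x\<bar> \<partial>\<nu>)"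
    by (rule add_mono[OF jensen_total[OF u] coarea2])
  finally show ?thesis .
qed

end

theorem theorem2p3:
  fixes \<phi> I f f' :: "real \<Rightarrow> real" and C :: real
  assumes phi_nonneg: "\<And>x. 0 \<le> x \<Longrightarrow> 0 \<le> \<phi> x"
    and phi_cont: "continuous_on {0..} \<phi>"
    and I_nonneg: "\<And>x. 0 \<le> x \<Longrightarrow> 0 \<le> I x"
    and C_pos: "C > 0"
    and I_mult: "\<And>a b. 0 \<le> a \<Longrightarrow> 0 \<le> b \<Longrightarrow> C * I (a * b) \<le> b * I a + a * I b"
    and I_concave: "concave_on {0..} I"
    and I_iso: "lower_isoperimetric (nu_measure \<phi>) I"
    and f_nonneg: "\<And>x. 0 \<le> x \<Longrightarrow> 0 \<le> f x"
    and f_deriv: "\<And>x. 0 \<le> x \<Longrightarrow> (f has_real_derivative f' x) (at x within {0..})"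
    and f'_cont: "continuous_on {0..} f'"
    and f_supp: "\<exists>R. \<forall>x\<ge>R. f x = 0"
  shows "ennreal (C * I (integral\<^sup>L (nu_measure \<phi>) f))
           \<le> (\<integral>\<^sup>+ x. ennreal (I (f x)) \<partial>nu_measure \<phi>)
             + (\<integral>\<^sup>+ x. ennreal \<bar>f' x\<bar> \<partial>nu_measure \<phi>)"
proof -
  obtain R0 where R0: "\<forall>x\<ge>R0. f x = 0" using f_supp by blast
  define R where "R = max 0 R0"
  have R: "0 \<le> R" "\<And>x. R \<le> x \<Longrightarrow> f x = 0" using R0 unfolding R_def by auto
  interpret thm_setup \<phi> I f f' C R
    by (unfold_locales) (use assms R in auto)
  show ?thesis using main unfolding u_def .
qed

end
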